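(* Let $N\ge3$, let $A=(\mathbb{Z}/N\mathbb{Z})^2$ and let $I=\mathbb{Q}[A]^0$ be the augmentation ideal (degree-$0$ elements) of the group algebra $\mathbb{Q}[A]$. Let $H=A\rtimes\{\pm1\}$ act on $I\otimes I$ by $a\cdot(d_0\otimes d_1)=([a]d_0)\otimes([-a]d_1)$ for $a\in A$ and $(-1)\cdot(d_0\otimes d_1)=-(d_1\otimes d_0)$, and let $\varepsilon:H\to\{\pm1\}$ be the canonical projection. Then the multiplication map $\mu:I\otimes I\to I$, $d_0\otimes d_1\mapsto d_0d_1$, induces an isomorphism $(I\otimes I)^\varepsilon\xrightarrow{\cong}I$, where $(I\otimes I)^\varepsilon=\{x : h\cdot x=\varepsilon(h)x\ \forall h\in H\}$.
   Context: For $a\in A$, $[a]$ denotes the corresponding basis element of $\mathbb{Q}[A]$, and products are taken in the group algebra. *)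

theory Defs
  imports Complex_Main
begin

type_synonym elt = "int \<times> int"

text \<open>The group A = (Z/NZ)^2, represented by the carrier {0..<N} x {0..<N}
  with componentwise addition mod N.\<close>
definition grpA :: "int \<Rightarrow> elt set" where
  "grpA N = {0..<N} \<times> {0..<N}"

definition addA :: "int \<Rightarrow> elt \<Rightarrow> elt \<Rightarrow> elt" where
  "addA N a b = ((fst a + fst b) mod N, (snd a + snd b) mod N)"

definition negA :: "int \<Rightarrow> elt \<Rightarrow> elt" where
  "negA N a = ((- fst a) mod N, (- snd a) mod N)"

text \<open>Group algebra Q[A]: rational functions on A (zero off the carrier);
  an element f stands for the sum of f(a)[a].\<close>
definition QA :: "int \<Rightarrow> (elt \<Rightarrow> rat) set" where
  "QA N = {f. \<forall>x. x \<notin> grpA N \<longrightarrow> f x = 0}"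

definition aug :: "int \<Rightarrow> (elt \<Rightarrow> rat) set" where
  "aug N = {f \<in> QA N. (\<Sum>x\<in>grpA N. f x) = 0}"

text \<open>Q[A] (x) Q[A] = Q[A x A]: F stands for the sum of F(x,y) [x](x)[y].\<close>
definition QA2 :: "int \<Rightarrow> (elt \<Rightarrow> elt \<Rightarrow> rat) set" where
  "QA2 N = {F. \<forall>x y. x \<notin> grpA N \<or> y \<notin> grpA N \<longrightarrow> F x y = 0}"

text \<open>I (x) I inside Q[A] (x) Q[A]: the common kernel of the two partial augmentations.\<close>
definition augTensor :: "int \<Rightarrow> (elt \<Rightarrow> elt \<Rightarrow> rat) set" where
  "augTensor N = {F \<in> QA2 N. (\<forall>x. (\<Sum>y\<in>grpA N. F x y) = 0) \<and> (\<forall>y. (\<Sum>x\<in>grpA N. F x y) = 0)}"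

text \<open>Action of H = A x| {+-1}; an element (a, s) with s = True meaning +1 and
  s = False meaning -1 is the product a * s (first s, then a).
  a . (d0 (x) d1) = [a]d0 (x) [-a]d1, (-1) . (d0 (x) d1) = - d1 (x) d0.\<close>
definition hact :: "int \<Rightarrow> elt \<times> bool \<Rightarrow> (elt \<Rightarrow> elt \<Rightarrow> rat) \<Rightarrow> (elt \<Rightarrow> elt \<Rightarrow> rat)" where
  "hact N h F = (\<lambda>x y. if x \<in> grpA N \<and> y \<in> grpA N then
      (if snd h then F (addA N x (negA N (fst h))) (addA N y (fst h))
       else - F (addA N y (fst h)) (addA N x (negA N (fst h))))
    else 0)"

definition eps :: "elt \<times> bool \<Rightarrow> rat" where
  "eps h = (if snd h then 1 else -1)"

definition epsPart :: "int \<Rightarrow> (elt \<Rightarrow> elt \<Rightarrow> rat) set" where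
  "epsPart N = {F \<in> augTensor N. \<forall>h. fst h \<in> grpA N \<longrightarrow>
                   hact N h F = (\<lambda>x y. eps h * F x y)}"

definition mu :: "int \<Rightarrow> (elt \<Rightarrow> elt \<Rightarrow> rat) \<Rightarrow> (elt \<Rightarrow> rat)" where
  "mu N F = (\<lambda>c. if c \<in> grpA N then
      (\<Sum>x\<in>grpA N. \<Sum>y\<in>grpA N. if addA N x y = c then F x y else 0) else 0)"

end

theory Submission
  imports Defs
begin

lemma key1:
  fixes N x y c :: int
  assumes "N > 0" "0 \<le> y" "y < N" "0 \<le> c" "c < N"
  shows "((x + y) mod N = c) \<longleftrightarrow> (y = (c + (- x) mod N) mod N)"
proof
  assume h: "(x + y) mod N = c"
  have "(c + (- x) mod N) mod N = ((x+y) mod N + (-x) mod N) mod N" using h by simp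
  also have "\<dots> = y mod N" by (simp add: mod_simps)
  also have "\<dots> = y" using assms by simp
  finally show "y = (c + (- x) mod N) mod N" by simp
next
  assume h: "y = (c + (- x) mod N) mod N"
  have "(x + y) mod N = (x + (c + (- x) mod N) mod N) mod N" using h by simp
  also have "\<dots> = c mod N" by (simp add: mod_simps)
  also have "\<dots> = c" using assms by simp
  finally show "(x + y) mod N = c" .
qed

lemma key:
  assumes "N > 0" "y \<in> grpA N" "c \<in> grpA N"
  shows "(addA N x y = c) \<longleftrightarrow> (y = addA N c (negA N x))"
  using assms key1[of N "snd y" "snd c" "snd x"] key1[of N "fst y" "fst c" "fst x"]
  by (cases x, cases y, cases c) (auto simp: addA_def negA_def grpA_def)

lemma addA_in: "N > 0 \<Longrightarrow> addA N x y \<in> grpA N"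
  by (simp add: addA_def grpA_def)

lemma negA_in: "N > 0 \<Longrightarrow> negA N x \<in> grpA N"
  by (simp add: negA_def grpA_def)

lemma addA_comm: "addA N x y = addA N y x"
  by (simp add: addA_def add.commute)

lemma negneg: "N > 0 \<Longrightarrow> y \<in> grpA N \<Longrightarrow> negA N (negA N y) = y"
  by (cases y) (auto simp: negA_def grpA_def mod_simps)

lemma addneg: "N > 0 \<Longrightarrow> addA N y (negA N y) = (0,0)"
  by (cases y) (auto simp: negA_def addA_def mod_simps)

lemma shift1: "addA N (addA N x (negA N a)) (addA N y a) = addA N x y"
  by (cases x, cases y, cases a) (simp add: negA_def addA_def mod_simps)

lemma shift2: "addA N (addA N y a) (addA N x (negA N a)) = addA N x y"
  using shift1 addA_comm by metis

lemma finA: "finite (grpA N)" by (simp add: grpA_def)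

lemma bijA:
  assumes "N > 0" "x \<in> grpA N"
  shows "bij_betw (addA N x) (grpA N) (grpA N)"
proof (rule bij_betw_imageI)
  show "inj_on (addA N x) (grpA N)"
  proof (rule inj_onI)
    fix y y' assume "y \<in> grpA N" "y' \<in> grpA N" "addA N x y = addA N x y'"
    thus "y = y'" using key[OF assms(1) _ addA_in[OF assms(1)]] by metis
  qed
  show "addA N x ` grpA N = grpA N"
  proof
    show "addA N x ` grpA N \<subseteq> grpA N" using addA_in[OF assms(1)] by blast
    show "grpA N \<subseteq> addA N x ` grpA N"
    proof
      fix c assume c: "c \<in> grpA N"
      have "addA N x (addA N c (negA N x)) = c"
        using key[OF assms(1) addA_in[OF assms(1)] c] by simp
      thus "c \<in> addA N x ` grpA N" using addA_in[OF assms(1)] by (metis imageI)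
    qed
  qed
qed

lemma sum_shift:
  assumes "N > 0" "x \<in> grpA N"
  shows "(\<Sum>y\<in>grpA N. f (addA N x y)) = (\<Sum>c\<in>grpA N. f c)"
  using sum.reindex_bij_betw[OF bijA[OF assms], of f] by simp

lemma mu_formula:
  assumes "N > 0" "c \<in> grpA N"
    and F: "\<And>x y. x \<in> grpA N \<Longrightarrow> y \<in> grpA N \<Longrightarrow> F x y = g (addA N x y)"
  shows "mu N F c = of_nat (card (grpA N)) * g c"
proof -
  have inner: "(\<Sum>y\<in>grpA N. if addA N x y = c then F x y else 0) = g c"
    if x: "x \<in> grpA N" for x
  proof -
    have "(\<Sum>y\<in>grpA N. if addA N x y = c then F x y else 0)
        = (\<Sum>y\<in>grpA N. if y = addA N c (negA N x) then g c else 0)"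
    proof (rule sum.cong)
      fix y assume y: "y \<in> grpA N"
      show "(if addA N x y = c then F x y else 0) = (if y = addA N c (negA N x) then g c else 0)"
        using key[OF assms(1) y assms(2), of x] F[OF x y] by auto
    qed simp
    also have "\<dots> = g c" using addA_in[OF assms(1)] finA by (simp add: sum.delta')
    finally show ?thesis .
  qed
  have "mu N F c = (\<Sum>x\<in>grpA N. g c)"
    unfolding mu_def using assms(2) inner by simp
  thus ?thesis by simp
qed

theorem lemma5p10:
  fixes N :: int
  assumes "N \<ge> 3"
  shows "bij_betw (mu N) (epsPart N) (aug N)"
proof -
  have N: "N > 0" using assms by simp
  define K :: rat where "K = of_nat (card (grpA N))"
  have "(0,0) \<in> grpA N" using N by (simp add: grpA_def)
  hence "card (grpA N) \<noteq> 0" using finA by (metis card_0_eq empty_iff)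
  hence K0: "K \<noteq> 0" by (simp add: K_def)
  have z: "(0::int,0::int) \<in> grpA N" by fact
  have str: "F x y = F (addA N x y) (0,0)"
    if F: "F \<in> epsPart N" and x: "x \<in> grpA N" and y: "y \<in> grpA N" for F x y
  proof -
    have A: "\<forall>h. fst h \<in> grpA N \<longrightarrow> hact N h F = (\<lambda>x y. eps h * F x y)"
      using F unfolding epsPart_def by blast
    have "hact N (negA N y, True) F = (\<lambda>u v. eps (negA N y, True) * F u v)"
      using A[rule_format, of "(negA N y, True)"] negA_in[OF N] by simp
    hence "hact N (negA N y, True) F x y = F x y" by (simp add: eps_def)
    thus ?thesis using x y by (simp add: hact_def negneg[OF N y] addneg[OF N])
  qed
  have muF: "mu N F c = K * F c (0,0)" if F: "F \<in> epsPart N" and c: "c \<in> grpA N" for F c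
    unfolding K_def by (rule mu_formula[OF N c]) (use str F in auto)
  have muF0: "mu N F c = 0" if "c \<notin> grpA N" for F c
    using that by (simp add: mu_def)
  show ?thesis
  proof (rule bij_betw_imageI)
    show "inj_on (mu N) (epsPart N)"
    proof (rule inj_onI)
      fix F G assume F: "F \<in> epsPart N" and G: "G \<in> epsPart N" and e: "mu N F = mu N G"
      have c: "F c (0,0) = G c (0,0)" if "c \<in> grpA N" for c
        using muF[OF F that] muF[OF G that] e K0 by (metis mult_left_cancel)
      show "F = G"
      proof (intro ext)
        fix x y
        show "F x y = G x y"
        proof (cases "x \<in> grpA N \<and> y \<in> grpA N")
          case True
          thus ?thesis using str[OF F] str[OF G] c addA_in[OF N] by metis
        next
          case False
          have "F \<in> QA2 N" "G \<in> QA2 N" using F G unfolding epsPart_def augTensor_def by auto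
          hence "\<forall>x y. x \<notin> grpA N \<or> y \<notin> grpA N \<longrightarrow> F x y = 0"
                "\<forall>x y. x \<notin> grpA N \<or> y \<notin> grpA N \<longrightarrow> G x y = 0"
            unfolding QA2_def by (simp_all only: mem_Collect_eq)
          thus ?thesis using False by (metis (no_types))
        qed
      qed
    qed
    show "mu N ` epsPart N = aug N"
    proof
      show "mu N ` epsPart N \<subseteq> aug N"
      proof
        fix f assume "f \<in> mu N ` epsPart N"
        then obtain F where F: "F \<in> epsPart N" and f: "f = mu N F" by auto
        have "f \<in> QA N" using f muF0 by (simp add: QA_def)
        moreover have "(\<Sum>c\<in>grpA N. f c) = 0"
        proof -
          have "(\<Sum>c\<in>grpA N. f c) = (\<Sum>c\<in>grpA N. K * F c (0,0))"
            using f muF[OF F] by simp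
          also have "\<dots> = K * (\<Sum>c\<in>grpA N. F c (0,0))" by (simp add: sum_distrib_left)
          also have "(\<Sum>c\<in>grpA N. F c (0,0)) = 0"
            using F unfolding epsPart_def augTensor_def by auto
          finally show ?thesis by simp
        qed
        ultimately show "f \<in> aug N" by (simp add: aug_def)
      qed
      show "aug N \<subseteq> mu N ` epsPart N"
      proof
        fix f assume f: "f \<in> aug N"
        define F where "F = (\<lambda>x y. if x \<in> grpA N \<and> y \<in> grpA N then f (addA N x y) / K else 0)"
        have fsum: "(\<Sum>c\<in>grpA N. f c) = 0" using f by (simp add: aug_def)
        have "F \<in> QA2 N" by (simp add: QA2_def F_def)
        moreover have "\<forall>x. (\<Sum>y\<in>grpA N. F x y) = 0"
        proof
          fix x show "(\<Sum>y\<in>grpA N. F x y) = 0"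
          proof (cases "x \<in> grpA N")
            case True
            have "(\<Sum>y\<in>grpA N. F x y) = (\<Sum>y\<in>grpA N. f (addA N x y) / K)"
              by (rule sum.cong) (use True in \<open>auto simp: F_def\<close>)
            also have "\<dots> = (\<Sum>c\<in>grpA N. f c / K)"
              by (rule sum_shift[OF N True])
            also have "\<dots> = 0" using fsum by (simp add: sum_divide_distrib[symmetric])
            finally show ?thesis .
          qed (simp add: F_def)
        qed
        moreover have "\<forall>y. (\<Sum>x\<in>grpA N. F x y) = 0"
        proof
          fix y show "(\<Sum>x\<in>grpA N. F x y) = 0"
          proof (cases "y \<in> grpA N")
            case True
            have "(\<Sum>x\<in>grpA N. F x y) = (\<Sum>x\<in>grpA N. f (addA N y x) / K)"
              by (rule sum.cong) (use True in \<open>auto simp: F_def addA_comm\<close>)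
            also have "\<dots> = (\<Sum>c\<in>grpA N. f c / K)"
              by (rule sum_shift[OF N True])
            also have "\<dots> = 0" using fsum by (simp add: sum_divide_distrib[symmetric])
            finally show ?thesis .
          qed (simp add: F_def)
        qed
        moreover have "hact N h F = (\<lambda>x y. eps h * F x y)" if "fst h \<in> grpA N" for h
        proof (intro ext)
          fix x y
          obtain a s where h: "h = (a, s)" by (cases h)
          show "hact N h F x y = eps h * F x y"
            by (cases s) (auto simp: h hact_def eps_def F_def addA_in[OF N] shift1 shift2)
        qed
        ultimately have FE: "F \<in> epsPart N" by (simp add: epsPart_def augTensor_def)
        have "mu N F = f"
        proof
          fix c show "mu N F c = f c"
          proof (cases "c \<in> grpA N")
            case True
            have "mu N F c = of_nat (card (grpA N)) * (f c / K)"
              by (rule mu_formula[OF N True]) (auto simp: F_def)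
            thus ?thesis using K0 by (simp add: K_def[symmetric])
          next
            case False
            have "f \<in> QA N" using f by (simp add: aug_def)
            hence "f c = 0" using False unfolding QA_def by blast
            thus ?thesis using False muF0 by simp
          qed
        qed
        thus "f \<in> mu N ` epsPart N" using FE by (metis imageI)
      qed
    qed
  qed
qed

end
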